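(* Let $n\ge 2$ and let $p^Y$ be a probability distribution on $\{1,\dots,n\}$ with nonincreasing rearrangement $p^Y_\downarrow$. Then the map $\mathcal{E}\mapsto S(\tilde p^Y_{\mathcal{E}})$ is strictly increasing on $[0,\,1-p^Y_\downarrow(1)]$.
   Context: $S(p)=-\sum_i p(i)\ln p(i)$. $p^Y_\downarrow$ is $p^Y$ rearranged so that $p^Y_\downarrow(1)\ge\dots\ge p^Y_\downarrow(n)$. For $\mathcal{E}\ge0$: if $p^Y_\downarrow(1)\ge 1-\mathcal{E}$, $\tilde p^Y_{\mathcal{E}}=p^Y_\downarrow$; otherwise let $M_{\mathcal{E}}$ be the largest $m\in\{2,\dots,n\}$ with $\frac{\mathcal{E}-\sum_{y=m+1}^n p^Y_\downarrow(y)}{m-1}<p^Y_\downarrow(m)$, and set $\tilde p^Y_{\mathcal{E}}(1)=1-\mathcal{E}$, $\tilde p^Y_{\mathcal{E}}(y)=\frac{\mathcal{E}-\sum_{y'=M_{\mathcal{E}}+1}^n p^Y_\downarrow(y')}{M_{\mathcal{E}}-1}$ for $2\le y\le M_{\mathcal{E}}$, and $\tilde p^Y_{\mathcal{E}}(y)=p^Y_\downarrow(y)$ for $y>M_{\mathcal{E}}$. *)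

theory Defs
  imports "HOL-Analysis.Analysis"
begin

text \<open>Distributions on {1..n} are functions nat => real; only the values on {1..n} matter.\<close>

definition is_distr :: "nat \<Rightarrow> (nat \<Rightarrow> real) \<Rightarrow> bool" where
  "is_distr n p \<longleftrightarrow> (\<forall>i\<in>{1..n}. 0 \<le> p i) \<and> (\<Sum>i\<in>{1..n}. p i) = 1"

text \<open>Shannon entropy with natural log (note 0 * ln 0 = 0 in Isabelle).\<close>
definition entropy :: "nat \<Rightarrow> (nat \<Rightarrow> real) \<Rightarrow> real" where
  "entropy n p = - (\<Sum>i\<in>{1..n}. p i * ln (p i))"

text \<open>Nonincreasing rearrangement: p composed with a permutation of {1..n} sorting it
  in nonincreasing order (the resulting function is independent of the choice).\<close>
definition sort_desc :: "nat \<Rightarrow> (nat \<Rightarrow> real) \<Rightarrow> (nat \<Rightarrow> real)" where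
  "sort_desc n p = p \<circ> (SOME \<sigma>. \<sigma> permutes {1..n} \<and>
       (\<forall>i j. 1 \<le> i \<and> i \<le> j \<and> j \<le> n \<longrightarrow> p (\<sigma> j) \<le> p (\<sigma> i)))"

definition M_idx :: "nat \<Rightarrow> (nat \<Rightarrow> real) \<Rightarrow> real \<Rightarrow> nat" where
  "M_idx n q E = (GREATEST m. m \<in> {2..n} \<and>
       (E - (\<Sum>y\<in>{m+1..n}. q y)) / real (m - 1) < q m)"

definition tilde :: "nat \<Rightarrow> (nat \<Rightarrow> real) \<Rightarrow> real \<Rightarrow> (nat \<Rightarrow> real)" where
  "tilde n q E =
    (if 1 - E \<le> q 1 then q
     else (let M = M_idx n q E in
       (\<lambda>y. if y = 1 then 1 - E
            else if 2 \<le> y \<and> y \<le> M then (E - (\<Sum>y'\<in>{M+1..n}. q y')) / real (M - 1)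
            else q y)))"

end

theory Submission
  imports Defs
begin

lemma sort_exists:
  "\<exists>\<sigma>. \<sigma> permutes {1..n} \<and> (\<forall>i j. 1 \<le> i \<and> i \<le> j \<and> j \<le> n \<longrightarrow> p (\<sigma> j) \<le> (p::nat\<Rightarrow>real) (\<sigma> i))"
proof -
  define ys where "ys = sort_key (\<lambda>i. - p i) [1..<Suc n]"
  have len: "length ys = n" by (simp add: ys_def)
  have dis: "distinct ys" by (simp add: ys_def)
  have st: "set ys = {1..n}" by (auto simp add: ys_def)
  have so: "sorted (map (\<lambda>i. - p i) ys)" by (simp add: ys_def)
  define \<sigma> where "\<sigma> i = (if i \<in> {1..n} then ys ! (i - 1) else i)" for i
  have b1: "bij_betw ((!) ys) {..<n} {1..n}"
    using bij_betw_nth[OF dis] len st by simp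
  have b2: "bij_betw (\<lambda>i. i - 1) {1..n} {..<n}"
    by (rule bij_betw_byWitness[where f'="\<lambda>i. i + 1"]) auto
  have "bij_betw ((!) ys \<circ> (\<lambda>i. i - 1)) {1..n} {1..n}"
    using bij_betw_trans[OF b2 b1] .
  then have "bij_betw \<sigma> {1..n} {1..n}"
    by (rule bij_betw_cong[THEN iffD1, rotated]) (simp add: \<sigma>_def)
  then have "\<sigma> permutes {1..n}"
    by (rule bij_imp_permutes) (auto simp add: \<sigma>_def)
  moreover have "p (\<sigma> j) \<le> p (\<sigma> i)" if "1 \<le> i" "i \<le> j" "j \<le> n" for i j
  proof -
    have "map (\<lambda>i. - p i) ys ! (i - 1) \<le> map (\<lambda>i. - p i) ys ! (j - 1)"
      using sorted_nth_mono[OF so, of "i - 1" "j - 1"] that len by simp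
    then show ?thesis using that len by (simp add: \<sigma>_def)
  qed
  ultimately show ?thesis by blast
qed

lemma sum_split1:
  assumes "1 \<le> (n::nat)" shows "sum (f::nat\<Rightarrow>real) {1..n} = f 1 + sum f {2..n}"
  using sum.atLeast_Suc_atMost[OF assms, of f] by (simp add: numeral_2_eq_2)

lemma term_le:
  fixes a b c :: real
  assumes "0 \<le> a" "a \<le> b" "b \<le> c" "0 < c"
  shows "(ln c + 1) * (a - b) \<le> a * ln a - b * ln b"
proof (cases "a = b")
  case True then show ?thesis by simp
next
  case False
  then have b0: "0 < b" using assms by linarith
  have G: "(ln b + 1) * (a - b) \<le> a * ln a - b * ln b"
  proof (cases "a = 0")
    case True then show ?thesis using b0 by (simp add: algebra_simps)
  next
    case False
    then have a0: "0 < a" using assms by linarith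
    have "ln b - ln a \<le> (b - a) / a" using ln_diff_le[OF b0 a0] .
    then have "a * (ln b - ln a) \<le> b - a" using a0 by (simp add: field_simps)
    then show ?thesis by (simp add: algebra_simps)
  qed
  have "ln b \<le> ln c" using b0 assms by simp
  then have "(ln c + 1) * (a - b) \<le> (ln b + 1) * (a - b)"
    using assms by (intro mult_right_mono_neg) auto
  with G show ?thesis by linarith
qed

lemma term_lt:
  fixes a b :: real
  assumes "0 < b" "b < a"
  shows "(ln b + 1) * (a - b) < a * ln a - b * ln b"
proof -
  have a0: "0 < a" using assms by linarith
  have "ln b - ln a < (b - a) / a" using ln_diff_less[OF assms(1) a0] assms by simp
  then have "a * (ln b - ln a) < b - a" using a0 by (simp add: field_simps)
  then show ?thesis by (simp add: algebra_simps)
qed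

lemma key:
  fixes t1 t2 :: "nat \<Rightarrow> real"
  assumes n2: "n \<ge> 2" and s1: "sum t1 {1..n} = 1" and s2: "sum t2 {1..n} = 1"
    and c0: "0 < t2 1" and c1: "t2 1 < t1 1"
    and hk: "\<forall>k\<in>{2..n}. 0 \<le> t1 k \<and> t1 k \<le> t2 k \<and> t2 k \<le> t2 1"
  shows "entropy n t1 < entropy n t2"
proof -
  define L where "L = ln (t2 1) + 1"
  define g where "g k = t1 k * ln (t1 k) - t2 k * ln (t2 k)" for k
  have n1: "1 \<le> n" using n2 by simp
  have h1: "L * (t1 1 - t2 1) < g 1"
    unfolding L_def g_def using term_lt[OF c0 c1] .
  have h2: "(\<Sum>k\<in>{2..n}. L * (t1 k - t2 k)) \<le> sum g {2..n}"
    unfolding L_def g_def using hk c0 by (intro sum_mono term_le) auto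
  have "entropy n t2 - entropy n t1 = sum g {1..n}"
    unfolding entropy_def g_def by (simp add: sum_subtractf)
  also have "\<dots> = g 1 + sum g {2..n}" using sum_split1[OF n1] .
  also have "\<dots> > L * (t1 1 - t2 1) + (\<Sum>k\<in>{2..n}. L * (t1 k - t2 k))"
    using h1 h2 by linarith
  also have "L * (t1 1 - t2 1) + (\<Sum>k\<in>{2..n}. L * (t1 k - t2 k)) = (\<Sum>k\<in>{1..n}. L * (t1 k - t2 k))"
    using sum_split1[OF n1, of "\<lambda>k. L * (t1 k - t2 k)"] by simp
  also have "\<dots> = L * (sum t1 {1..n} - sum t2 {1..n})"
    by (simp add: sum_subtractf right_diff_distrib sum_distrib_left)
  also have "\<dots> = 0" using s1 s2 by simp
  finally show ?thesis by simp
qed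

lemma flat:
  fixes q :: "nat \<Rightarrow> real"
  assumes n2: "n \<ge> 2" and nn: "\<forall>k\<in>{1..n}. 0 \<le> q k"
    and mono: "\<forall>i j. 1 \<le> i \<and> i \<le> j \<and> j \<le> n \<longrightarrow> q j \<le> q i"
    and qs: "sum q {1..n} = 1" and E0: "0 \<le> E" and E1: "E < 1 - q 1"
  shows "\<exists>v. 0 \<le> v \<and> tilde n q E 1 = 1 - E \<and> (\<forall>k\<in>{2..n}. tilde n q E k = min (q k) v)
             \<and> sum (tilde n q E) {1..n} = 1"
proof -
  define P where "P m = (m \<in> {2..n} \<and> (E - (\<Sum>y\<in>{m+1..n}. q y)) / real (m - 1) < q m)" for m
  define M where "M = M_idx n q E"
  have MG: "M = Greatest P" unfolding M_def M_idx_def P_def by simp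
  have n1: "1 \<le> n" using n2 by simp
  have s2: "sum q {2..n} = q 2 + sum q {3..n}"
    using sum.atLeast_Suc_atMost[of 2 n q] n2 by (simp add: numeral_3_eq_3 numeral_2_eq_2)
  have "P 2" unfolding P_def using n2 sum_split1[OF n1, of q] s2 qs E1 by simp
  have bnd: "\<And>y. P y \<Longrightarrow> y \<le> n" unfolding P_def by simp
  have PM: "P M" unfolding MG by (rule GreatestI_nat[of P 2 n, OF \<open>P 2\<close> bnd])
  have geM: "\<And>m. P m \<Longrightarrow> m \<le> M" unfolding MG by (rule Greatest_le_nat[of P _ n, OF _ bnd])
  define v where "v = (E - (\<Sum>y\<in>{M+1..n}. q y)) / real (M - 1)"
  have M2: "2 \<le> M" "M \<le> n" using PM unfolding P_def by auto
  have vM: "v < q M" using PM unfolding P_def v_def by blast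
  have Mv: "real (M - 1) * v = E - (\<Sum>y\<in>{M+1..n}. q y)"
    unfolding v_def using M2 by simp
  have vnext: "q (M+1) \<le> v" if "M < n"
  proof -
    have "\<not> P (M+1)" using geM by force
    then have "\<not> (E - (\<Sum>y\<in>{M+2..n}. q y)) / real M < q (M+1)"
      unfolding P_def using that M2 by (simp add: numeral_2_eq_2)
    then have A: "q (M+1) * real M \<le> E - (\<Sum>y\<in>{M+2..n}. q y)"
      using M2 by (simp add: not_less pos_le_divide_eq)
    have B: "(\<Sum>y\<in>{M+1..n}. q y) = q (M+1) + (\<Sum>y\<in>{M+2..n}. q y)"
      using sum.atLeast_Suc_atMost[of "M+1" n q] that by simp
    have "real (M - 1) * q (M+1) \<le> real (M - 1) * v"
      using A B Mv M2 by (simp add: of_nat_diff algebra_simps)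
    then show ?thesis using M2 by (simp add: mult_le_cancel_left)
  qed
  have v0: "0 \<le> v"
  proof (cases "M < n")
    case True
    have "0 \<le> q (M+1)" using nn True by simp
    then show ?thesis using vnext[OF True] by linarith
  next
    case False then have "M = n" using M2 by simp
    then show ?thesis unfolding v_def using E0 by simp
  qed
  have T: "tilde n q E = (\<lambda>y. if y = 1 then 1 - E else if 2 \<le> y \<and> y \<le> M then v else q y)"
    unfolding tilde_def Let_def M_def[symmetric] v_def using E1 by (auto simp: fun_eq_iff)
  have mins: "tilde n q E k = min (q k) v" if k: "k \<in> {2..n}" for k
  proof (cases "k \<le> M")
    case True
    then have "q M \<le> q k" using mono k M2 by simp
    then show ?thesis using True k vM by (simp add: T)
  next
    case False
    then have "q k \<le> q (M+1)" using mono k M2 by simp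
    then show ?thesis using False k vnext by (simp add: T)
  qed
  have U: "{2..n} = {2..M} \<union> {M+1..n}" using M2 by auto
  have "sum (tilde n q E) {2..n} = sum (tilde n q E) {2..M} + sum (tilde n q E) {M+1..n}"
    unfolding U by (rule sum.union_disjoint) auto
  also have "sum (tilde n q E) {2..M} = real (M - 1) * v"
    by (simp add: T)
  also have "sum (tilde n q E) {M+1..n} = sum q {M+1..n}"
    using M2 by (intro sum.cong) (auto simp: T)
  finally have "sum (tilde n q E) {2..n} = E" using Mv by simp
  then have "sum (tilde n q E) {1..n} = 1" using sum_split1[OF n1, of "tilde n q E"] by (simp add: T)
  then show ?thesis using v0 mins by (intro exI[of _ v]) (simp add: T)
qed

theorem proposition2:
  fixes n :: nat and p :: "nat \<Rightarrow> real"
  assumes "n \<ge> 2" and "is_distr n p"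
  shows "\<forall>E1 E2. 0 \<le> E1 \<and> E1 < E2 \<and> E2 \<le> 1 - sort_desc n p 1 \<longrightarrow>
           entropy n (tilde n (sort_desc n p) E1) < entropy n (tilde n (sort_desc n p) E2)"
proof (intro allI impI)
  fix E1 E2 assume E: "0 \<le> E1 \<and> E1 < E2 \<and> E2 \<le> 1 - sort_desc n p 1"
  define \<sigma> where "\<sigma> = (SOME \<sigma>. \<sigma> permutes {1..n} \<and>
       (\<forall>i j. 1 \<le> i \<and> i \<le> j \<and> j \<le> n \<longrightarrow> p (\<sigma> j) \<le> p (\<sigma> i)))"
  have \<sigma>: "\<sigma> permutes {1..n} \<and> (\<forall>i j. 1 \<le> i \<and> i \<le> j \<and> j \<le> n \<longrightarrow> p (\<sigma> j) \<le> p (\<sigma> i))"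
    unfolding \<sigma>_def using someI_ex[OF sort_exists[of n p]] .
  define q where "q = sort_desc n p"
  have q: "q = p \<circ> \<sigma>" unfolding q_def sort_desc_def \<sigma>_def ..
  have n2: "n \<ge> 2" using assms by simp
  have nn: "\<forall>k\<in>{1..n}. 0 \<le> q k"
    using assms(2) \<sigma> permutes_in_image[of \<sigma> "{1..n}"] unfolding is_distr_def q by auto
  have mono: "\<forall>i j. 1 \<le> i \<and> i \<le> j \<and> j \<le> n \<longrightarrow> q j \<le> q i" using \<sigma> q by simp
  have qs: "sum q {1..n} = 1"
    using assms(2) sum.permute[of \<sigma> "{1..n}" p] \<sigma> unfolding is_distr_def q by simp
  have le1: "q k \<le> q 1" if "k \<in> {1..n}" for k using mono that by simp
  have q1: "0 < q 1"
  proof (rule ccontr)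
    assume "\<not> 0 < q 1"
    then have "\<forall>k\<in>{1..n}. q k = 0" using le1 nn by force
    then have "sum q {1..n} = 0" by simp
    with qs show False by simp
  qed
  have E': "0 \<le> E1" "E1 < E2" "E2 \<le> 1 - q 1" using E q_def by auto
  obtain v1 where v1: "0 \<le> v1" "tilde n q E1 1 = 1 - E1"
      "\<forall>k\<in>{2..n}. tilde n q E1 k = min (q k) v1" "sum (tilde n q E1) {1..n} = 1"
    using flat[OF n2 nn mono qs E'(1)] E' by force
  have n1: "1 \<le> n" using n2 by simp
  have "entropy n (tilde n q E1) < entropy n (tilde n q E2)"
  proof (cases "E2 = 1 - q 1")
    case True
    then have T: "tilde n q E2 = q" unfolding tilde_def by simp
    show ?thesis unfolding T
      using v1 E' True q1 nn le1 by (intro key[OF n2 v1(4) qs]) auto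
  next
    case False
    then have E2: "E2 < 1 - q 1" using E' by simp
    obtain v2 where v2: "0 \<le> v2" "tilde n q E2 1 = 1 - E2"
        "\<forall>k\<in>{2..n}. tilde n q E2 k = min (q k) v2" "sum (tilde n q E2) {1..n} = 1"
      using flat[OF n2 nn mono qs _ E2] E' by force
    have sE: "(\<Sum>k\<in>{2..n}. min (q k) v) = E" if
       "tilde n q E 1 = 1 - E" "\<forall>k\<in>{2..n}. tilde n q E k = min (q k) v" "sum (tilde n q E) {1..n} = 1"
       for v E
    proof -
      have "(\<Sum>k\<in>{2..n}. min (q k) v) = sum (tilde n q E) {2..n}" using that(2) by simp
      then show ?thesis using that(1,3) sum_split1[OF n1, of "tilde n q E"] by simp
    qed
    have vv: "v1 \<le> v2"
    proof (rule ccontr)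
      assume "\<not> v1 \<le> v2"
      then have "(\<Sum>k\<in>{2..n}. min (q k) v2) \<le> (\<Sum>k\<in>{2..n}. min (q k) v1)"
        by (intro sum_mono) auto
      then show False using sE[OF v1(2,3,4)] sE[OF v2(2,3,4)] E' by simp
    qed
    have "\<forall>k\<in>{2..n}. 0 \<le> tilde n q E1 k \<and> tilde n q E1 k \<le> tilde n q E2 k
        \<and> tilde n q E2 k \<le> tilde n q E2 1"
    proof
      fix k assume k: "k \<in> {2..n}"
      have "q k \<le> q 1" "0 \<le> q k" using le1 nn k by auto
      then show "0 \<le> tilde n q E1 k \<and> tilde n q E1 k \<le> tilde n q E2 k
        \<and> tilde n q E2 k \<le> tilde n q E2 1"
        using v1 v2 vv k E2 by auto
    qed
    then show ?thesis
      using v1 v2 E' E2 q1 by (intro key[OF n2 v1(4) v2(4)]) auto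
  qed
  then show "entropy n (tilde n (sort_desc n p) E1) < entropy n (tilde n (sort_desc n p) E2)"
    unfolding q_def .
qed

end
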